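(* Let $A$ be a uniform algebra, let $\theta : A\to M_n(\mathbb{C})$ be a continuous unital homomorphism, and let $\alpha : A\to A$ be a unital antilinear contraction such that $$\theta_\alpha(f):=\tfrac12\bigl(\theta(f)+\theta(\alpha(f))^*\bigr)$$ satisfies $\|\theta_\alpha\|\le 1$. Then for every $f\in A$, $$W(\theta_\alpha(f))\subset \operatorname{conv}(\sigma(f)).$$
   Context: A uniform algebra is a norm-closed subalgebra of $C(X)$, for $X$ a compact Hausdorff space, containing the constants, with the supremum norm. A map $\alpha$ is antilinear if $\alpha(\lambda f+g)=\overline\lambda\alpha(f)+\alpha(g)$. It is a contraction if $\|\alpha(f)\|\le\|f\|$, and it is unital if $\alpha(1)=1$. $W(T)=\{\langle Tx,x\rangle:\|x\|=1\}$ denotes the numerical range of a matrix $T$. $\sigma(f)$ is the spectrum of $f$ as an element of $A$, and $\operatorname{conv}$ denotes convex hull. *)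

theory Defs
  imports "HOL-Analysis.Analysis"
begin

text \<open>The compact Hausdorff space X is the whole (t2) type 'x, assumed compact.
 Functions are elements of C(X) = continuous functions 'x => complex.\<close>

definition supnorm :: "('x::topological_space \<Rightarrow> complex) \<Rightarrow> real" where
  "supnorm f = (SUP x. cmod (f x))"

definition uniform_algebra :: "('x::topological_space \<Rightarrow> complex) set \<Rightarrow> bool" where
  "uniform_algebra A \<longleftrightarrow>
     (\<forall>f\<in>A. continuous_on UNIV f) \<and>
     (\<forall>c. (\<lambda>x. c) \<in> A) \<and>
     (\<forall>f\<in>A. \<forall>g\<in>A. (\<lambda>x. f x + g x) \<in> A) \<and>
     (\<forall>f\<in>A. \<forall>g\<in>A. (\<lambda>x. f x * g x) \<in> A) \<and>
     (\<forall>c. \<forall>f\<in>A. (\<lambda>x. c * f x) \<in> A) \<and>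
     (\<forall>f. continuous_on UNIV f \<and> (\<forall>e>0. \<exists>g\<in>A. supnorm (\<lambda>x. f x - g x) < e) \<longrightarrow> f \<in> A)"

definition ua_spectrum :: "('x::topological_space \<Rightarrow> complex) set \<Rightarrow> ('x \<Rightarrow> complex) \<Rightarrow> complex set" where
  "ua_spectrum A f = {c. \<not> (\<exists>g\<in>A. \<forall>x. (f x - c) * g x = 1)}"

definition mnorm :: "complex^'n^'n \<Rightarrow> real" where
  "mnorm T = onorm (\<lambda>v. T *v v)"

definition adjoint_mat :: "complex^'n^'n \<Rightarrow> complex^'n^'n" where
  "adjoint_mat T = (\<chi> i j. cnj (T $ j $ i))"

definition cinner :: "complex^'n \<Rightarrow> complex^'n \<Rightarrow> complex" where
  "cinner x y = (\<Sum>i\<in>UNIV. x $ i * cnj (y $ i))"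

definition numerical_range :: "complex^'n^'n \<Rightarrow> complex set" where
  "numerical_range T = {cinner (T *v x) x | x. norm x = 1}"

definition cmat_scale :: "complex \<Rightarrow> complex^'n^'n \<Rightarrow> complex^'n^'n" where
  "cmat_scale c T = (\<chi> i j. c * T $ i $ j)"

end

theory Submission
  imports Defs
begin

lemma disc_hull:
  fixes K :: "complex set" and z :: complex
  assumes K: "compact K" "K \<noteq> {}"
    and H: "\<And>c r. (\<And>k. k \<in> K \<Longrightarrow> cmod (k - c) \<le> r) \<Longrightarrow> cmod (z - c) \<le> r"
  shows "z \<in> convex hull K"
proof (rule ccontr)
  assume nz: "z \<notin> convex hull K"
  have "compact (convex hull K)" using K by (simp add: compact_convex_hull)
  then obtain a b where ab: "inner a z < b" "\<forall>x\<in>convex hull K. inner a x > b"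
    using separating_hyperplane_closed_point[OF convex_convex_hull _ nz] compact_imp_closed by blast
  define \<delta> where "\<delta> = b - inner a z"
  have dpos: "\<delta> > 0" using ab by (simp add: \<delta>_def)
  have ka: "inner (k - z) a \<ge> \<delta>" if "k \<in> K" for k
  proof -
    have "inner a k > b" using ab(2) hull_subset[of K convex] that by blast
    then show ?thesis by (simp add: \<delta>_def inner_diff_right inner_commute)
  qed
  obtain B where B: "\<And>k. k \<in> K \<Longrightarrow> cmod (k - z) \<le> B"
  proof -
    have "bounded ((\<lambda>k. k - z) ` K)" using K compact_imp_bounded bounded_translation_minus by blast
    then obtain B where "\<forall>y\<in>(\<lambda>k. k - z) ` K. cmod y \<le> B" by (auto simp: bounded_iff)
    then show ?thesis using that by auto
  qed
  define D where "D = B^2 + 1"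
  define t where "t = D / \<delta>"
  define c where "c = z + t *\<^sub>R a"
  have tpos: "t > 0" using dpos unfolding t_def D_def by (intro divide_pos_pos) (auto intro: add_nonneg_pos)
  have td: "t * \<delta> = D" using dpos by (simp add: t_def)
  have sq: "(cmod (k - c))^2 \<le> (t * cmod a)^2 - 1" if k: "k \<in> K" for k
  proof -
    have e: "k - c = (k - z) - t *\<^sub>R a" by (simp add: c_def)
    have "(cmod (k - c))^2 = (cmod (k - z))^2 - 2 * t * inner (k - z) a + (t * cmod a)^2"
      unfolding e using dot_norm_neg[of "k - z" "t *\<^sub>R a"]
      by (simp add: power_mult_distrib)
    also have "\<dots> \<le> B^2 - 2 * t * \<delta> + (t * cmod a)^2"
    proof -
      have "(cmod (k - z))^2 \<le> B^2" using B[OF k] by (simp add: abs_le_square_iff power_mono)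
      moreover have "t * \<delta> \<le> t * inner (k - z) a" using ka[OF k] tpos by simp
      ultimately show ?thesis by linarith
    qed
    also have "\<dots> \<le> (t * cmod a)^2 - 1" proof -
      have "2 * t * \<delta> = 2 * (B^2 + 1)" using td by (simp add: D_def mult.assoc)
      then show ?thesis using zero_le_power2[of B] by (simp add: algebra_simps)
    qed
    finally show ?thesis .
  qed
  obtain k0 where k0: "k0 \<in> K" using K by blast
  have nn: "(t * cmod a)^2 - 1 \<ge> 0" using sq[OF k0] by (smt (verit) zero_le_power2)
  have "cmod (z - c) \<le> sqrt ((t * cmod a)^2 - 1)"
    by (rule H) (use sq in \<open>simp add: real_le_rsqrt\<close>)
  moreover have "cmod (z - c) = t * cmod a" using tpos by (simp add: c_def)
  ultimately have "(t * cmod a)^2 \<le> (t * cmod a)^2 - 1"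
    using nn by (metis norm_ge_zero power_mono real_sqrt_pow2)
  then show False by simp
qed


lemma cinner_re: "Re (cinner a b) = inner a b"
  by (simp add: cinner_def inner_vec_def inner_complex_def)

lemma cinner_scale: "cinner (w *s a) b = w * cinner a b"
  by (simp add: cinner_def sum_distrib_left mult.assoc)

lemma norm_scale_unit: "cmod w = 1 \<Longrightarrow> norm (w *s a) = norm a"
  by (simp add: norm_vec_def norm_mult)

lemma cinner_cs: "cmod (cinner a b) \<le> norm a * norm b"
proof (cases "cinner a b = 0")
  case True then show ?thesis by simp
next
  case False
  define w where "w = cnj (sgn (cinner a b))"
  have w1: "cmod w = 1" using False by (simp add: w_def norm_sgn)
  have "w * cinner a b = of_real (cmod (cinner a b))"
  proof -
    let ?z = "cinner a b"
    have "w * ?z = cnj ?z * ?z / of_real (cmod ?z)" by (simp add: w_def sgn_eq)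
    also have "cnj ?z * ?z = of_real ((cmod ?z)^2)" by (metis complex_norm_square mult.commute)
    finally show ?thesis using False by (simp add: power2_eq_square)
  qed
  then have "cmod (cinner a b) = Re (cinner (w *s a) b)" by (simp add: cinner_scale)
  also have "\<dots> = inner (w *s a) b" by (simp add: cinner_re)
  also have "\<dots> \<le> norm (w *s a) * norm b" by (rule norm_cauchy_schwarz)
  also have "\<dots> = norm a * norm b" using w1 by (simp add: norm_scale_unit)
  finally show ?thesis .
qed

lemma cinner_self: "cinner x x = of_real ((norm x)^2)"
proof -
  have "Im (cinner x x) = 0" by (simp add: cinner_def Im_sum)
  moreover have "Re (cinner x x) = (norm x)^2" by (simp add: cinner_re power2_norm_eq_inner)
  ultimately show ?thesis by (simp add: complex_eq_iff)
qed

lemma mat_shift: "cinner ((M - cmat_scale c (mat 1)) *v x) x = cinner (M *v x) x - c * cinner x x"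
proof -
  have eq: "(M - cmat_scale c (mat 1)) *v x = M *v x - c *s x"
  proof -
    have e: "(M $ i $ j - c * (if i = j then 1 else 0)) * x $ j = M $ i $ j * x $ j - (if i = j then c * x $ j else 0)" for i j
      by (simp add: algebra_simps)
    show ?thesis by (simp add: vec_eq_iff matrix_vector_mult_def cmat_scale_def mat_def e sum_subtractf)
  qed
  show ?thesis unfolding cinner_def eq by (simp add: sum_subtractf sum_distrib_left algebra_simps)
qed

lemma mnorm_bound: "norm (M *v v) \<le> mnorm M * norm v"
  unfolding mnorm_def by (rule onorm[OF matrix_vector_mul_bounded_linear])

lemma shift_alg: "cmat_scale (1/2) (P + cmat_scale (-c) (mat 1) + adjoint_mat (cmat_scale (-cnj c) (mat 1) + Q))
  = cmat_scale (1/2) (P + adjoint_mat Q) - cmat_scale c (mat 1)"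
  by (simp add: vec_eq_iff cmat_scale_def adjoint_mat_def mat_def algebra_simps)



theorem lemma5p2:
  fixes A :: "('x::t2_space \<Rightarrow> complex) set"
    and \<theta> :: "('x \<Rightarrow> complex) \<Rightarrow> complex^'n^'n"
    and \<alpha> :: "('x \<Rightarrow> complex) \<Rightarrow> ('x \<Rightarrow> complex)"
  assumes X_compact: "compact (UNIV :: 'x set)"
    and A: "uniform_algebra A"
    and \<theta>_add: "\<And>f g. f \<in> A \<Longrightarrow> g \<in> A \<Longrightarrow> \<theta> (\<lambda>x. f x + g x) = \<theta> f + \<theta> g"
    and \<theta>_scale: "\<And>c f. f \<in> A \<Longrightarrow> \<theta> (\<lambda>x. c * f x) = cmat_scale c (\<theta> f)"
    and \<theta>_mult: "\<And>f g. f \<in> A \<Longrightarrow> g \<in> A \<Longrightarrow> \<theta> (\<lambda>x. f x * g x) = \<theta> f ** \<theta> g"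
    and \<theta>_unital: "\<theta> (\<lambda>x. 1) = mat 1"
    and \<theta>_cont: "\<And>f e. f \<in> A \<Longrightarrow> e > 0 \<Longrightarrow>
                 \<exists>d>0. \<forall>g\<in>A. supnorm (\<lambda>x. g x - f x) < d \<longrightarrow> mnorm (\<theta> g - \<theta> f) < e"
    and \<alpha>_maps: "\<And>f. f \<in> A \<Longrightarrow> \<alpha> f \<in> A"
    and \<alpha>_antilinear: "\<And>c f g. f \<in> A \<Longrightarrow> g \<in> A \<Longrightarrow>
                 \<alpha> (\<lambda>x. c * f x + g x) = (\<lambda>x. cnj c * \<alpha> f x + \<alpha> g x)"
    and \<alpha>_contr: "\<And>f. f \<in> A \<Longrightarrow> supnorm (\<alpha> f) \<le> supnorm f"
    and \<alpha>_unital: "\<alpha> (\<lambda>x. 1) = (\<lambda>x. 1)"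
    and \<theta>\<alpha>_norm: "\<And>f. f \<in> A \<Longrightarrow>
                 mnorm (cmat_scale (1/2) (\<theta> f + adjoint_mat (\<theta> (\<alpha> f)))) \<le> supnorm f"
  shows "\<forall>f\<in>A. numerical_range (cmat_scale (1/2) (\<theta> f + adjoint_mat (\<theta> (\<alpha> f))))
                \<subseteq> convex hull (ua_spectrum A f)"
proof (intro ballI subsetI)
  fix f z
  assume fA: "f \<in> A"
  assume "z \<in> numerical_range (cmat_scale (1/2) (\<theta> f + adjoint_mat (\<theta> (\<alpha> f))))"
  then obtain v where v1: "norm v = 1"
    and zv: "z = cinner (cmat_scale (1/2) (\<theta> f + adjoint_mat (\<theta> (\<alpha> f))) *v v) v"
    unfolding numerical_range_def by blast
  have Acont: "continuous_on UNIV f" using A fA unfolding uniform_algebra_def by blast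
  have Aconst: "\<And>c. (\<lambda>x. c) \<in> A" using A unfolding uniform_algebra_def by blast
  have Aadd: "\<And>g h. g \<in> A \<Longrightarrow> h \<in> A \<Longrightarrow> (\<lambda>x. g x + h x) \<in> A"
    using A unfolding uniform_algebra_def by blast
  have Kc: "compact (f ` UNIV)" using compact_continuous_image[OF Acont X_compact] .
  have Kspec: "f ` UNIV \<subseteq> ua_spectrum A f" unfolding ua_spectrum_def by (auto intro: exI[where x=xa] simp: image_iff) (metis mult_zero_left right_minus_eq zero_neq_one)
  have "z \<in> convex hull (f ` UNIV)"
  proof (rule disc_hull[OF Kc])
    show "f ` UNIV \<noteq> {}" by simp
  next
    fix c r
    assume kr: "\<And>k. k \<in> f ` UNIV \<Longrightarrow> cmod (k - c) \<le> r"
    define g where "g = (\<lambda>x. f x - c)"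
    have g_eq: "g = (\<lambda>x. f x + (\<lambda>x. - c * 1) x)" by (simp add: g_def)
    have c1A: "(\<lambda>x. - c * 1) \<in> A" using Aconst by simp
    have oneA: "(\<lambda>x. 1) \<in> A" using Aconst by simp
    have gA: "g \<in> A" unfolding g_eq using Aadd[OF fA c1A] .
    have sup: "supnorm g \<le> r" unfolding supnorm_def g_def
      by (rule cSUP_least) (use kr in auto)
    have h1: "\<theta> g = \<theta> f + cmat_scale (-c) (mat 1)"
      unfolding g_eq \<theta>_add[OF fA c1A] \<theta>_scale[OF oneA] \<theta>_unital ..
    have h2: "\<alpha> g = (\<lambda>x. (\<lambda>x. - cnj c * 1) x + \<alpha> f x)"
    proof -
      have "g = (\<lambda>x. (-c) * (\<lambda>x. 1) x + f x)" by (simp add: g_def)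
      then show ?thesis using \<alpha>_antilinear[OF oneA fA, of "-c"] \<alpha>_unital by simp
    qed
    have c2A: "(\<lambda>x. - cnj c * 1) \<in> A" using Aconst by simp
    have h3: "\<theta> (\<alpha> g) = cmat_scale (- cnj c) (mat 1) + \<theta> (\<alpha> f)"
      unfolding h2 \<theta>_add[OF c2A \<alpha>_maps[OF fA]] \<theta>_scale[OF oneA] \<theta>_unital ..
    have Tg: "cmat_scale (1/2) (\<theta> g + adjoint_mat (\<theta> (\<alpha> g)))
       = cmat_scale (1/2) (\<theta> f + adjoint_mat (\<theta> (\<alpha> f))) - cmat_scale c (mat 1)"
      unfolding h1 h3 by (rule shift_alg)
    have "z - c = cinner (cmat_scale (1/2) (\<theta> g + adjoint_mat (\<theta> (\<alpha> g))) *v v) v"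
      unfolding Tg mat_shift zv cinner_self v1 by simp
    then have "cmod (z - c) \<le> norm (cmat_scale (1/2) (\<theta> g + adjoint_mat (\<theta> (\<alpha> g))) *v v) * norm v"
      using cinner_cs by metis
    also have "\<dots> \<le> mnorm (cmat_scale (1/2) (\<theta> g + adjoint_mat (\<theta> (\<alpha> g))))"
      using mnorm_bound[of _ v] v1 by simp
    also have "\<dots> \<le> supnorm g" by (rule \<theta>\<alpha>_norm[OF gA])
    also have "\<dots> \<le> r" by (rule sup)
    finally show "cmod (z - c) \<le> r" .
  qed
  then show "z \<in> convex hull (ua_spectrum A f)" using hull_mono[OF Kspec] by blast
qed

end
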